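(* Let $k\ge 2$ and consider the cycle query $C_k=R_1(\underline{x_1},x_2),\dots,R_k(\underline{x_k},x_1)$ in which each $R_i$ is of consistent or inconsistent type. Then $\mathrm{CERTAINTY}(C_k)$ is first-order expressible if and only if at most one of $R_1,\dots,R_k$ is of inconsistent type.
   Context: Relations of consistent type satisfy their key constraint (first attribute) in every instance; relations of inconsistent type may violate it. A repair is a maximal subset of the instance satisfying all key constraints; $I\vDash C_k$ iff $C_k(r)$ is true for every repair $r$. $\mathrm{CERTAINTY}(C_k)$ is first-order expressible if there is a first-order sentence $\varphi$ over the schema such that for every instance $I$, $I\vDash C_k$ iff $I\models\varphi$. *)

theory Defs
  imports Main
begin

text \<open>Database instances over the schema R_0, ..., R_(k-1) (the paper's R_1..R_k),
  each relation binary with key = first attribute.\<close>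

type_synonym inst = "nat \<Rightarrow> (nat \<times> nat) set"

definition key_consistent :: "(nat \<times> nat) set \<Rightarrow> bool" where
  "key_consistent R \<longleftrightarrow> (\<forall>a b c. (a, b) \<in> R \<longrightarrow> (a, c) \<in> R \<longrightarrow> b = c)"

definition sub_inst :: "nat \<Rightarrow> inst \<Rightarrow> inst \<Rightarrow> bool" where
  "sub_inst k r I \<longleftrightarrow> (\<forall>i<k. r i \<subseteq> I i) \<and> (\<forall>i. k \<le> i \<longrightarrow> r i = {})"

definition consistent_inst :: "nat \<Rightarrow> inst \<Rightarrow> bool" where
  "consistent_inst k r \<longleftrightarrow> (\<forall>i<k. key_consistent (r i))"

definition repair :: "nat \<Rightarrow> inst \<Rightarrow> inst \<Rightarrow> bool" where
  "repair k I r \<longleftrightarrow> sub_inst k r I \<and> consistent_inst k r \<and>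
     (\<forall>r'. sub_inst k r' I \<longrightarrow> consistent_inst k r' \<longrightarrow> sub_inst k r r' \<longrightarrow> r' = r)"

text \<open>Legal instances: finite, only relations R_0..R_(k-1), and relations of consistent
  type (incons i = False) satisfy their key constraint. incons i = True means R_i is of
  inconsistent type.\<close>
definition legal_inst :: "nat \<Rightarrow> (nat \<Rightarrow> bool) \<Rightarrow> inst \<Rightarrow> bool" where
  "legal_inst k incons I \<longleftrightarrow> (\<forall>i<k. finite (I i)) \<and> (\<forall>i. k \<le> i \<longrightarrow> I i = {}) \<and>
     (\<forall>i<k. \<not> incons i \<longrightarrow> key_consistent (I i))"

text \<open>The cycle query C_k = R_1(x_1,x_2), ..., R_k(x_k,x_1), 0-indexed.\<close>
definition cycle_query :: "nat \<Rightarrow> inst \<Rightarrow> bool" where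
  "cycle_query k r \<longleftrightarrow> (\<exists>x :: nat \<Rightarrow> nat. \<forall>i<k. (x i, x (Suc i mod k)) \<in> r i)"

definition certain :: "nat \<Rightarrow> inst \<Rightarrow> bool" where
  "certain k I \<longleftrightarrow> (\<forall>r. repair k I r \<longrightarrow> cycle_query k r)"

datatype fo = Eq nat nat | Rel nat nat nat | Neg fo | Conj fo fo | Ex nat fo

fun fv :: "fo \<Rightarrow> nat set" where
  "fv (Eq x y) = {x, y}"
| "fv (Rel i x y) = {x, y}"
| "fv (Neg \<phi>) = fv \<phi>"
| "fv (Conj \<phi> \<psi>) = fv \<phi> \<union> fv \<psi>"
| "fv (Ex x \<phi>) = fv \<phi> - {x}"

fun rels :: "fo \<Rightarrow> nat set" where
  "rels (Eq x y) = {}"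
| "rels (Rel i x y) = {i}"
| "rels (Neg \<phi>) = rels \<phi>"
| "rels (Conj \<phi> \<psi>) = rels \<phi> \<union> rels \<psi>"
| "rels (Ex x \<phi>) = rels \<phi>"

text \<open>Active domain of an instance: the universe of the finite structure.\<close>
definition adom :: "nat \<Rightarrow> inst \<Rightarrow> nat set" where
  "adom k I = (\<Union>i<k. fst ` I i \<union> snd ` I i)"

fun sat :: "nat \<Rightarrow> inst \<Rightarrow> (nat \<Rightarrow> nat) \<Rightarrow> fo \<Rightarrow> bool" where
  "sat k I v (Eq x y) \<longleftrightarrow> v x = v y"
| "sat k I v (Rel i x y) \<longleftrightarrow> (v x, v y) \<in> I i"
| "sat k I v (Neg \<phi>) \<longleftrightarrow> \<not> sat k I v \<phi>"
| "sat k I v (Conj \<phi> \<psi>) \<longleftrightarrow> sat k I v \<phi> \<and> sat k I v \<psi>"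
| "sat k I v (Ex x \<phi>) \<longleftrightarrow> (\<exists>a\<in>adom k I. sat k I (v(x := a)) \<phi>)"

definition fo_sentence :: "nat \<Rightarrow> fo \<Rightarrow> bool" where
  "fo_sentence k \<phi> \<longleftrightarrow> fv \<phi> = {} \<and> rels \<phi> \<subseteq> {..<k}"

definition models :: "nat \<Rightarrow> inst \<Rightarrow> fo \<Rightarrow> bool" where
  "models k I \<phi> \<longleftrightarrow> sat k I (\<lambda>_. 0) \<phi>"

definition certainty_fo_expressible :: "nat \<Rightarrow> (nat \<Rightarrow> bool) \<Rightarrow> bool" where
  "certainty_fo_expressible k incons \<longleftrightarrow>
     (\<exists>\<phi>. fo_sentence k \<phi> \<and> (\<forall>I. legal_inst k incons I \<longrightarrow> (certain k I \<longleftrightarrow> models k I \<phi>)))"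

end

theory Submission
  imports Defs
begin

lemma repair_char:
  "repair k I r \<longleftrightarrow> sub_inst k r I \<and> consistent_inst k r \<and> (\<forall>i<k. fst ` I i \<subseteq> fst ` r i)"
proof
  assume R: "repair k I r"
  hence s: "sub_inst k r I" and c: "consistent_inst k r"
    and m: "\<And>r'. sub_inst k r' I \<Longrightarrow> consistent_inst k r' \<Longrightarrow> sub_inst k r r' \<Longrightarrow> r' = r"
    unfolding repair_def by blast+
  have "fst ` I i \<subseteq> fst ` r i" if ik: "i < k" for i
  proof
    fix a assume "a \<in> fst ` I i"
    then obtain c0 where ac: "(a, c0) \<in> I i" by force
    show "a \<in> fst ` r i"
    proof (rule ccontr)
      assume na: "a \<notin> fst ` r i"
      define r' where "r' = r(i := insert (a, c0) (r i))"
      have "sub_inst k r' I" using s ac ik unfolding sub_inst_def r'_def by auto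
      moreover have "consistent_inst k r'"
        using c na unfolding consistent_inst_def key_consistent_def r'_def
        by (auto simp: image_iff)
      moreover have "sub_inst k r r'" using s ik unfolding sub_inst_def r'_def by auto
      ultimately have "r' = r" by (rule m)
      hence "(a, c0) \<in> r i" unfolding r'_def by (metis fun_upd_same insertI1)
      thus False using na by force
    qed
  qed
  thus "sub_inst k r I \<and> consistent_inst k r \<and> (\<forall>i<k. fst ` I i \<subseteq> fst ` r i)"
    using s c by blast
next
  assume "sub_inst k r I \<and> consistent_inst k r \<and> (\<forall>i<k. fst ` I i \<subseteq> fst ` r i)"
  hence s: "sub_inst k r I" and c: "consistent_inst k r" and f: "\<forall>i<k. fst ` I i \<subseteq> fst ` r i"
    by blast+
  show "repair k I r" unfolding repair_def
  proof (intro conjI s c allI impI)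
    fix r' assume s': "sub_inst k r' I" and c': "consistent_inst k r'" and rr: "sub_inst k r r'"
    show "r' = r"
    proof
      fix i
      show "r' i = r i"
      proof (cases "i < k")
        case True
        show ?thesis
        proof
          show "r i \<subseteq> r' i" using rr True unfolding sub_inst_def by blast
          show "r' i \<subseteq> r i"
          proof
            fix x assume x: "x \<in> r' i"
            obtain a c0 where xe: "x = (a, c0)" by force
            have "a \<in> fst ` I i" using x xe s' True unfolding sub_inst_def by force
            then obtain b where ab: "(a, b) \<in> r i" using f True by force
            hence "(a, b) \<in> r' i" using rr True unfolding sub_inst_def by blast
            hence "b = c0" using c' x xe True unfolding consistent_inst_def key_consistent_def by blast
            thus "x \<in> r i" using ab xe by simp
          qed
        qed
      next
        case False
        thus ?thesis using s s' unfolding sub_inst_def by simp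
      qed
    qed
  qed
qed

lemma repair_cons:
  assumes "repair k I r" "i < k" "key_consistent (I i)"
  shows "r i = I i"
proof -
  have s: "r i \<subseteq> I i" and c: "key_consistent (r i)" and f: "fst ` I i \<subseteq> fst ` r i"
    using assms unfolding repair_char sub_inst_def consistent_inst_def by blast+
  have "I i \<subseteq> r i"
  proof
    fix x assume x: "x \<in> I i"
    obtain a c0 where xe: "x = (a, c0)" by force
    have "a \<in> fst ` r i" using f x xe by force
    then obtain b where ab: "(a, b) \<in> r i" by force
    hence "b = c0" using s x xe assms(3) unfolding key_consistent_def by blast
    thus "x \<in> r i" using ab xe by simp
  qed
  thus ?thesis using s by blast
qed

definition path :: "nat \<Rightarrow> nat \<Rightarrow> inst \<Rightarrow> nat \<Rightarrow> nat \<Rightarrow> bool" where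
  "path k j I a b \<longleftrightarrow> (\<exists>x. x j = a \<and> x (Suc j mod k) = b \<and>
     (\<forall>i<k. i \<noteq> j \<longrightarrow> (x i, x (Suc i mod k)) \<in> I i))"

definition good :: "nat \<Rightarrow> nat \<Rightarrow> inst \<Rightarrow> bool" where
  "good k j I \<longleftrightarrow> (\<exists>a. (\<exists>b. (a, b) \<in> I j) \<and> (\<forall>b. (a, b) \<in> I j \<longrightarrow> path k j I a b))"

lemma cert_char:
  assumes jk: "j < k" and k2: "k \<ge> 2"
    and cons: "\<forall>i<k. i \<noteq> j \<longrightarrow> key_consistent (I i)"
    and emp: "\<forall>i. k \<le> i \<longrightarrow> I i = {}"
  shows "certain k I \<longleftrightarrow> good k j I"
proof
  assume G: "good k j I"
  then obtain a where a1: "\<exists>b. (a, b) \<in> I j" and a2: "\<forall>b. (a, b) \<in> I j \<longrightarrow> path k j I a b"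
    unfolding good_def by blast
  show "certain k I" unfolding certain_def
  proof (intro allI impI)
    fix r assume R: "repair k I r"
    have s: "r j \<subseteq> I j" and f: "fst ` I j \<subseteq> fst ` r j"
      using R jk unfolding repair_char sub_inst_def by blast+
    have "a \<in> fst ` I j" using a1 by force
    then obtain b where ab: "(a, b) \<in> r j" using f by force
    hence "path k j I a b" using a2 s by blast
    then obtain x where x1: "x j = a" and x2: "x (Suc j mod k) = b"
      and x3: "\<forall>i<k. i \<noteq> j \<longrightarrow> (x i, x (Suc i mod k)) \<in> I i"
      unfolding path_def by blast
    have "\<forall>i<k. (x i, x (Suc i mod k)) \<in> r i"
    proof (intro allI impI)
      fix i assume ik: "i < k"
      show "(x i, x (Suc i mod k)) \<in> r i"
      proof (cases "i = j")
        case True thus ?thesis using ab x1 x2 by simp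
      next
        case False
        thus ?thesis using x3 ik repair_cons[OF R ik] cons by auto
      qed
    qed
    thus "cycle_query k r" unfolding cycle_query_def by blast
  qed
next
  assume C: "certain k I"
  show "good k j I"
  proof (rule ccontr)
    assume NG: "\<not> good k j I"
    define bad where "bad a = (SOME b. (a, b) \<in> I j \<and> \<not> path k j I a b)" for a
    have badp: "(a, bad a) \<in> I j \<and> \<not> path k j I a (bad a)" if "a \<in> fst ` I j" for a
    proof -
      have "\<exists>b. (a, b) \<in> I j \<and> \<not> path k j I a b" using NG that unfolding good_def by force
      thus ?thesis unfolding bad_def by (rule someI_ex)
    qed
    define r where "r = I(j := {(a, bad a) | a. a \<in> fst ` I j})"
    have R: "repair k I r" unfolding repair_char
    proof (intro conjI)
      show "sub_inst k r I" unfolding sub_inst_def r_def using badp emp jk by auto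
      show "consistent_inst k r" unfolding consistent_inst_def r_def using cons
        by (auto simp: key_consistent_def)
      show "\<forall>i<k. fst ` I i \<subseteq> fst ` r i"
      proof (intro allI impI subsetI)
        fix i a assume "i < k" "a \<in> fst ` I i"
        thus "a \<in> fst ` r i"
          by (cases "i = j") (auto simp: r_def image_iff)
      qed
    qed
    hence "cycle_query k r" using C unfolding certain_def by blast
    then obtain x where x: "\<forall>i<k. (x i, x (Suc i mod k)) \<in> r i" unfolding cycle_query_def by blast
    have "(x j, x (Suc j mod k)) \<in> r j" using x jk by blast
    then obtain a where aI: "a \<in> fst ` I j" and xa: "x j = a" and xb: "x (Suc j mod k) = bad a"
      unfolding r_def by auto
    have "path k j I a (bad a)" unfolding path_def
    proof (intro exI conjI allI impI)
      show "x j = a" by (rule xa)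
      show "x (Suc j mod k) = bad a" by (rule xb)
      fix i assume "i < k" "i \<noteq> j"
      thus "(x i, x (Suc i mod k)) \<in> I i" using x unfolding r_def by auto
    qed
    thus False using badp[OF aI] by blast
  qed
qed

fun exs :: "nat list \<Rightarrow> fo \<Rightarrow> fo" where
  "exs [] \<phi> = \<phi>"
| "exs (x # xs) \<phi> = Ex x (exs xs \<phi>)"

fun conjs :: "fo list \<Rightarrow> fo" where
  "conjs [] = Eq 0 0"
| "conjs (\<phi> # \<phi>s) = Conj \<phi> (conjs \<phi>s)"

lemma sat_conjs: "sat k I v (conjs \<phi>s) \<longleftrightarrow> (\<forall>\<phi>\<in>set \<phi>s. sat k I v \<phi>)"
  by (induction \<phi>s) auto

lemma fv_conjs_sub: "fv (conjs \<phi>s) \<subseteq> insert 0 (\<Union>\<phi>\<in>set \<phi>s. fv \<phi>)"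
  by (induction \<phi>s) auto

lemma rels_conjs: "rels (conjs \<phi>s) = (\<Union>\<phi>\<in>set \<phi>s. rels \<phi>)"
  by (induction \<phi>s) auto

lemma fv_exs: "fv (exs xs \<phi>) = fv \<phi> - set xs"
  by (induction xs) auto

lemma rels_exs: "rels (exs xs \<phi>) = rels \<phi>"
  by (induction xs) auto

lemma sat_exs: "sat k I v (exs xs \<phi>) \<longleftrightarrow>
  (\<exists>w. (\<forall>y\<in>set xs. w y \<in> adom k I) \<and> (\<forall>y. y \<notin> set xs \<longrightarrow> w y = v y) \<and> sat k I w \<phi>)"
proof (induction xs arbitrary: v)
  case Nil
  have "(\<forall>y. w y = v y) \<longleftrightarrow> w = v" for w :: "nat \<Rightarrow> nat" by (auto simp: fun_eq_iff)
  thus ?case by auto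
next
  case (Cons z zs)
  show ?case
  proof
    assume "sat k I v (exs (z # zs) \<phi>)"
    then obtain a where a: "a \<in> adom k I" and "sat k I (v(z := a)) (exs zs \<phi>)" by auto
    then obtain w where w1: "\<forall>y\<in>set zs. w y \<in> adom k I" and w2: "\<forall>y. y \<notin> set zs \<longrightarrow> w y = (v(z:=a)) y"
      and w3: "sat k I w \<phi>" using Cons.IH by blast
    show "\<exists>w. (\<forall>y\<in>set (z # zs). w y \<in> adom k I) \<and> (\<forall>y. y \<notin> set (z # zs) \<longrightarrow> w y = v y) \<and> sat k I w \<phi>"
    proof (intro exI conjI)
      show "\<forall>y\<in>set (z # zs). w y \<in> adom k I" using w1 w2 a by (metis fun_upd_same set_ConsD)
      show "\<forall>y. y \<notin> set (z # zs) \<longrightarrow> w y = v y" using w2 by auto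
    qed (rule w3)
  next
    assume "\<exists>w. (\<forall>y\<in>set (z # zs). w y \<in> adom k I) \<and> (\<forall>y. y \<notin> set (z # zs) \<longrightarrow> w y = v y) \<and> sat k I w \<phi>"
    then obtain w where w1: "\<forall>y\<in>set (z # zs). w y \<in> adom k I" and w2: "\<forall>y. y \<notin> set (z # zs) \<longrightarrow> w y = v y"
      and w3: "sat k I w \<phi>" by blast
    have "sat k I (v(z := w z)) (exs zs \<phi>)"
      using Cons.IH w1 w2 w3 by (intro iffD2[OF Cons.IH] exI[of _ w]) auto
    moreover have "w z \<in> adom k I" using w1 by simp
    ultimately show "sat k I v (exs (z # zs) \<phi>)" by auto
  qed
qed

definition others :: "nat \<Rightarrow> nat \<Rightarrow> nat list" where
  "others k j = filter (\<lambda>i. i \<noteq> j \<and> i \<noteq> Suc j mod k) [0..<k]"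

definition body :: "nat \<Rightarrow> nat \<Rightarrow> fo" where
  "body k j = conjs (map (\<lambda>i. Rel i i (Suc i mod k)) (filter (\<lambda>i. i \<noteq> j) [0..<k]))"

definition Phi :: "nat \<Rightarrow> nat \<Rightarrow> fo" where
  "Phi k j = Ex j (Conj (Ex (Suc j mod k) (Rel j j (Suc j mod k)))
     (Neg (Ex (Suc j mod k) (Conj (Rel j j (Suc j mod k)) (Neg (exs (others k j) (body k j)))))))"

lemma adomI1: "i < k \<Longrightarrow> (a, b) \<in> I i \<Longrightarrow> a \<in> adom k I"
  unfolding adom_def by force
lemma adomI2: "i < k \<Longrightarrow> (a, b) \<in> I i \<Longrightarrow> b \<in> adom k I"
  unfolding adom_def by force

lemma sat_inner:
  assumes jk: "j < k" and k2: "k \<ge> 2" and uj: "u j = a" and uj1: "u (Suc j mod k) = b"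
  shows "sat k I u (exs (others k j) (body k j)) \<longleftrightarrow> path k j I a b"
proof
  assume "sat k I u (exs (others k j) (body k j))"
  then obtain w where w2: "\<forall>y. y \<notin> set (others k j) \<longrightarrow> w y = u y" and w3: "sat k I w (body k j)"
    unfolding sat_exs by blast
  have "j \<notin> set (others k j)" "Suc j mod k \<notin> set (others k j)" unfolding others_def by auto
  hence "w j = a" "w (Suc j mod k) = b" using w2 uj uj1 by auto
  moreover have "\<forall>i<k. i \<noteq> j \<longrightarrow> (w i, w (Suc i mod k)) \<in> I i"
    using w3 unfolding body_def sat_conjs by auto
  ultimately show "path k j I a b" unfolding path_def by blast
next
  assume "path k j I a b"
  then obtain x where x1: "x j = a" and x2: "x (Suc j mod k) = b"
    and x3: "\<forall>i<k. i \<noteq> j \<longrightarrow> (x i, x (Suc i mod k)) \<in> I i" unfolding path_def by blast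
  define w where "w y = (if y \<in> set (others k j) then x y else u y)" for y
  have wi: "w i = x i" if "i < k" for i
    using that x1 x2 uj uj1 unfolding w_def others_def by auto
  show "sat k I u (exs (others k j) (body k j))" unfolding sat_exs
  proof (intro exI conjI)
    show "\<forall>y\<in>set (others k j). w y \<in> adom k I"
    proof
      fix y assume y: "y \<in> set (others k j)"
      hence "y < k" "y \<noteq> j" unfolding others_def by auto
      thus "w y \<in> adom k I" using x3 wi adomI1 by metis
    qed
    show "\<forall>y. y \<notin> set (others k j) \<longrightarrow> w y = u y" unfolding w_def by auto
    have "Suc i mod k < k" for i using k2 by simp
    thus "sat k I w (body k j)" unfolding body_def sat_conjs using x3 wi by auto
  qed
qed

lemma models_Phi:
  assumes jk: "j < k" and k2: "k \<ge> 2"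
  shows "models k I (Phi k j) \<longleftrightarrow> good k j I"
proof -
  have ne: "j \<noteq> Suc j mod k" using jk k2
  proof (cases "Suc j < k")
    case False
    hence "Suc j = k" using jk by simp
    thus ?thesis using k2 by auto
  qed simp
  let ?v = "(\<lambda>_. 0) :: nat \<Rightarrow> nat"
  have "models k I (Phi k j) \<longleftrightarrow> (\<exists>a\<in>adom k I. (\<exists>b\<in>adom k I. (a, b) \<in> I j) \<and>
     \<not>(\<exists>b\<in>adom k I. (a, b) \<in> I j \<and> \<not> path k j I a b))"
    unfolding models_def Phi_def using ne
    by (simp add: sat_inner[OF jk k2])
  also have "\<dots> \<longleftrightarrow> good k j I" unfolding good_def using adomI1[OF jk] adomI2[OF jk] by blast
  finally show ?thesis .
qed

lemma Phi_sentence: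
  assumes jk: "j < k" and k2: "k \<ge> 2"
  shows "fo_sentence k (Phi k j)"
proof -
  let ?L = "map (\<lambda>i. Rel i i (Suc i mod k)) (filter (\<lambda>i. i \<noteq> j) [0..<k])"
  have k0: "0 < k" using k2 by simp
  have A: "\<forall>\<phi>\<in>set ?L. fv \<phi> \<subseteq> {..<k}"
  proof
    fix \<phi> assume "\<phi> \<in> set ?L"
    then obtain i where "i < k" "\<phi> = Rel i i (Suc i mod k)" by auto
    thus "fv \<phi> \<subseteq> {..<k}" using k0 by simp
  qed
  have "fv (body k j) \<subseteq> insert 0 (\<Union>\<phi>\<in>set ?L. fv \<phi>)"
    unfolding body_def by (rule fv_conjs_sub)
  also have "\<dots> \<subseteq> {..<k}" using A k0 by blast
  finally have fb: "fv (body k j) \<subseteq> {..<k}" .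
  have "set (others k j) = {..<k} - {j, Suc j mod k}" unfolding others_def by auto
  hence fi: "fv (exs (others k j) (body k j)) \<subseteq> {j, Suc j mod k}"
    unfolding fv_exs using fb by blast
  have B: "\<forall>\<phi>\<in>set ?L. rels \<phi> \<subseteq> {..<k}" by auto
  have rb: "rels (body k j) \<subseteq> {..<k}" unfolding body_def rels_conjs using B by blast
  have "fv (Phi k j) = {}" unfolding Phi_def using fi by auto
  moreover have "rels (Phi k j) \<subseteq> {..<k}" unfolding Phi_def using rb jk by (simp add: rels_exs)
  ultimately show ?thesis unfolding fo_sentence_def by blast
qed

fun qd :: "fo \<Rightarrow> nat" where
  "qd (Eq x y) = 0"
| "qd (Rel i x y) = 0"
| "qd (Neg \<phi>) = qd \<phi>"
| "qd (Conj \<phi> \<psi>) = max (qd \<phi>) (qd \<psi>)"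
| "qd (Ex x \<phi>) = Suc (qd \<phi>)"

lemma ef_lemma:
  assumes atom: "\<And>m v w X x y. P m v w X \<Longrightarrow> x \<in> X \<Longrightarrow> y \<in> X \<Longrightarrow>
      (v x = v y \<longleftrightarrow> w x = w y) \<and> (\<forall>i. (v x, v y) \<in> I i \<longleftrightarrow> (w x, w y) \<in> J i)"
    and forth: "\<And>m v w X x a. P (Suc m) v w X \<Longrightarrow> a \<in> adom k I \<Longrightarrow>
      \<exists>b\<in>adom k J. P m (v(x := a)) (w(x := b)) (insert x X)"
    and bk: "\<And>m v w X x b. P (Suc m) v w X \<Longrightarrow> b \<in> adom k J \<Longrightarrow>
      \<exists>a\<in>adom k I. P m (v(x := a)) (w(x := b)) (insert x X)"
  shows "P m v w X \<Longrightarrow> qd \<phi> \<le> m \<Longrightarrow> fv \<phi> \<subseteq> X \<Longrightarrow> sat k I v \<phi> \<longleftrightarrow> sat k J w \<phi>"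
proof (induction \<phi> arbitrary: m v w X)
  case (Eq x y)
  thus ?case using atom[of m v w X x y] by simp
next
  case (Rel i x y)
  thus ?case using atom[of m v w X x y] by simp
next
  case (Neg \<phi>)
  thus ?case by simp
next
  case (Conj \<phi> \<psi>)
  thus ?case by simp
next
  case (Ex x \<phi>)
  obtain m' where m: "m = Suc m'" using Ex.prems(2) by (cases m) auto
  have q: "qd \<phi> \<le> m'" using Ex.prems(2) m by simp
  have f: "fv \<phi> \<subseteq> insert x X" using Ex.prems(3) by auto
  have P: "P (Suc m') v w X" using Ex.prems(1) m by simp
  show ?case
  proof
    assume "sat k I v (Ex x \<phi>)"
    then obtain a where a: "a \<in> adom k I" and s: "sat k I (v(x := a)) \<phi>" by auto
    obtain b where b: "b \<in> adom k J" and Pb: "P m' (v(x := a)) (w(x := b)) (insert x X)"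
      using forth[OF P a] by blast
    have "sat k J (w(x := b)) \<phi>" using Ex.IH[OF Pb q f] s by blast
    thus "sat k J w (Ex x \<phi>)" using b by auto
  next
    assume "sat k J w (Ex x \<phi>)"
    then obtain b where b: "b \<in> adom k J" and s: "sat k J (w(x := b)) \<phi>" by auto
    obtain a where a: "a \<in> adom k I" and Pa: "P m' (v(x := a)) (w(x := b)) (insert x X)"
      using bk[OF P b] by blast
    have "sat k I (v(x := a)) \<phi>" using Ex.IH[OF Pa q f] s by blast
    thus "sat k I v (Ex x \<phi>)" using a by auto
  qed
qed

definition pos :: "nat \<Rightarrow> nat" where "pos e = e div 2"
definition cp :: "nat \<Rightarrow> nat" where "cp e = e mod 2"

lemma elem_eq: "a = b \<longleftrightarrow> pos a = pos b \<and> cp a = cp b"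
  unfolding pos_def cp_def by (metis div_mult_mod_eq)

lemma cp_lt: "cp e < 2" unfolding cp_def by simp
lemma cp_cases: "cp e = 0 \<or> cp e = 1" unfolding cp_def by auto

lemma pos_mk[simp]: "c < 2 \<Longrightarrow> pos (2 * t + c) = t" unfolding pos_def by simp
lemma cp_mk[simp]: "c < 2 \<Longrightarrow> cp (2 * t + c) = c" unfolding cp_def by simp

definition present :: "nat \<Rightarrow> (nat \<Rightarrow> bool) \<Rightarrow> (nat \<Rightarrow> bool) \<Rightarrow> nat \<Rightarrow> bool" where
  "present N lE rE e \<longleftrightarrow> pos e \<le> N \<and>
     ((1 \<le> pos e \<and> pos e < N) \<or> (pos e = 0 \<and> lE (cp e)) \<or> (pos e = N \<and> rE (cp e)))"

definition alive :: "nat \<Rightarrow> nat \<Rightarrow> bool" where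
  "alive N e \<longleftrightarrow> 1 \<le> pos e \<and> pos e < N"

definition edge :: "nat \<Rightarrow> (nat \<Rightarrow> bool) \<Rightarrow> (nat \<Rightarrow> bool) \<Rightarrow> nat \<Rightarrow> nat \<Rightarrow> bool" where
  "edge N lE rE e e' \<longleftrightarrow> alive N e \<and> present N lE rE e' \<and> cp e = cp e' \<and>
     (pos e' = Suc (pos e) \<or> pos e = Suc (pos e'))"

definition inst :: "nat \<Rightarrow> nat \<Rightarrow> nat \<Rightarrow> nat \<Rightarrow> (nat \<Rightarrow> bool) \<Rightarrow> (nat \<Rightarrow> bool) \<Rightarrow> inst" where
  "inst k p q N lE rE = (\<lambda>i. if i = p then {(e, e'). edge N lE rE e e' \<and> even (pos e)}
     else if i = q then {(e, e'). edge N lE rE e e' \<and> odd (pos e)}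
     else if i < k then {(e, e'). e' = e \<and> present N lE rE e} else {})"

definition single_ok where
  "single_ok N l1 r1 l2 r2 D a b \<longleftrightarrow> present N l1 r1 a \<and> present N l2 r2 b \<and>
     (even (pos a) \<longleftrightarrow> even (pos b)) \<and>
     ((pos a \<le> D \<or> pos b \<le> D) \<longrightarrow> pos a = pos b \<and> l1 (cp a) = l2 (cp b)) \<and>
     ((N \<le> pos a + D \<or> N \<le> pos b + D) \<longrightarrow> pos a = pos b \<and> r1 (cp a) = r2 (cp b))"

definition close :: "nat \<Rightarrow> nat \<Rightarrow> nat \<Rightarrow> bool" where
  "close D a a' \<longleftrightarrow> cp a = cp a' \<and> pos a \<le> pos a' + D \<and> pos a' \<le> pos a + D"

definition pair_ok where
  "pair_ok D a b a' b' \<longleftrightarrow> (close D a a' \<or> close D b b') \<longrightarrow>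
     (cp a = cp a' \<and> cp b = cp b' \<and> pos a' + pos b = pos b' + pos a)"

definition Inv where
  "Inv N l1 r1 l2 r2 D S \<longleftrightarrow> (\<forall>(a, b)\<in>S. single_ok N l1 r1 l2 r2 D a b) \<and>
     (\<forall>(a, b)\<in>S. \<forall>(a', b')\<in>S. pair_ok D a b a' b')"

lemma inv_mono:
  assumes "Inv N l1 r1 l2 r2 D' S" "D \<le> D'" "S' \<subseteq> S"
  shows "Inv N l1 r1 l2 r2 D S'"
proof -
  have "single_ok N l1 r1 l2 r2 D a b" if h: "single_ok N l1 r1 l2 r2 D' a b" for a b
  proof -
    have i1: "pos a \<le> D \<or> pos b \<le> D \<Longrightarrow> pos a \<le> D' \<or> pos b \<le> D'" using assms(2) by linarith
    have i2: "N \<le> pos a + D \<or> N \<le> pos b + D \<Longrightarrow> N \<le> pos a + D' \<or> N \<le> pos b + D'"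
      using assms(2) by linarith
    show ?thesis using h i1 i2 unfolding single_ok_def by blast
  qed
  moreover have "pair_ok D a b a' b'" if h: "pair_ok D' a b a' b'" for a b a' b'
  proof -
    have "close D x y \<Longrightarrow> close D' x y" for x y unfolding close_def using assms(2) by linarith
    thus ?thesis using h unfolding pair_ok_def by blast
  qed
  ultimately show ?thesis using assms(1,3) unfolding Inv_def by blast
qed

lemma pair_ok_sym: "pair_ok D a b a' b' \<longleftrightarrow> pair_ok D a' b' a b"
  unfolding pair_ok_def close_def by auto

lemma pair_ok_refl: "pair_ok D a b a b"
  unfolding pair_ok_def by auto

lemma inv_insertI:
  assumes "Inv N l1 r1 l2 r2 D S" "single_ok N l1 r1 l2 r2 D a b"
    "\<forall>(a', b')\<in>S. pair_ok D a b a' b'"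
  shows "Inv N l1 r1 l2 r2 D (insert (a, b) S)"
proof -
  have H: "pair_ok D x y x' y'" if u: "(x, y) \<in> insert (a, b) S" and u': "(x', y') \<in> insert (a, b) S"
    for x y x' y'
  proof (cases "(x, y) = (a, b)")
    case True
    show ?thesis
    proof (cases "(x', y') = (a, b)")
      case True
      thus ?thesis using \<open>(x, y) = (a, b)\<close> pair_ok_refl by simp
    next
      case False
      hence "(x', y') \<in> S" using u' by blast
      thus ?thesis using True assms(3) by auto
    qed
  next
    case False
    hence uS: "(x, y) \<in> S" using u by blast
    show ?thesis
    proof (cases "(x', y') = (a, b)")
      case True
      thus ?thesis using uS assms(3) pair_ok_sym by fastforce
    next
      case False
      hence "(x', y') \<in> S" using u' by blast
      thus ?thesis using uS assms(1) unfolding Inv_def by auto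
    qed
  qed
  have "\<forall>(x, y)\<in>insert (a, b) S. \<forall>(x', y')\<in>insert (a, b) S. pair_ok D x y x' y'"
    using H by auto
  moreover have "\<forall>(x, y)\<in>insert (a, b) S. single_ok N l1 r1 l2 r2 D x y"
    using assms(1,2) unfolding Inv_def by auto
  ultimately show ?thesis unfolding Inv_def by blast
qed

lemma inv_swap:
  assumes "Inv N l1 r1 l2 r2 D S"
  shows "Inv N l2 r2 l1 r1 D (prod.swap ` S)"
proof -
  have A: "single_ok N l2 r2 l1 r1 D b a" if "(a, b) \<in> S" for a b
    using assms that unfolding Inv_def single_ok_def by auto
  have B: "pair_ok D b a b' a'" if "(a, b) \<in> S" "(a', b') \<in> S" for a b a' b'
  proof -
    have "pair_ok D a b a' b'" using assms that unfolding Inv_def by auto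
    thus ?thesis unfolding pair_ok_def by auto
  qed
  show ?thesis unfolding Inv_def
  proof (intro conjI)
    show "\<forall>(a, b)\<in>prod.swap ` S. single_ok N l2 r2 l1 r1 D a b"
    proof
      fix u assume "u \<in> prod.swap ` S"
      then obtain a b where "(a, b) \<in> S" "u = (b, a)" by auto
      thus "case u of (a, b) \<Rightarrow> single_ok N l2 r2 l1 r1 D a b" using A by simp
    qed
    show "\<forall>(a, b)\<in>prod.swap ` S. \<forall>(a', b')\<in>prod.swap ` S. pair_ok D a b a' b'"
    proof
      fix u assume "u \<in> prod.swap ` S"
      then obtain a b where ab: "(a, b) \<in> S" "u = (b, a)" by auto
      show "case u of (a, b) \<Rightarrow> \<forall>(a', b')\<in>prod.swap ` S. pair_ok D a b a' b'"
      proof -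
        have "\<forall>(a', b')\<in>prod.swap ` S. pair_ok D b a a' b'"
        proof
          fix u' assume "u' \<in> prod.swap ` S"
          then obtain a' b' where "(a', b') \<in> S" "u' = (b', a')" by auto
          thus "case u' of (a'', b'') \<Rightarrow> pair_ok D b a a'' b''" using B ab by simp
        qed
        thus ?thesis using ab by simp
      qed
    qed
  qed
qed

lemma inst_mem: "(a, a') \<in> inst k p q N lE rE i \<longleftrightarrow>
  (if i = p then edge N lE rE a a' \<and> even (pos a) else if i = q then edge N lE rE a a' \<and> odd (pos a)
   else if i < k then a' = a \<and> present N lE rE a else False)"
  unfolding inst_def by simp

lemma inv_atom:
  assumes I: "Inv N l1 r1 l2 r2 D S" and D: "1 \<le> D" and ab: "(a, b) \<in> S" and ab': "(a', b') \<in> S"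
  shows "(a = a' \<longleftrightarrow> b = b') \<and> (\<forall>i. (a, a') \<in> inst k p q N l1 r1 i \<longleftrightarrow> (b, b') \<in> inst k p q N l2 r2 i)"
proof -
  have s: "single_ok N l1 r1 l2 r2 D a b" and s': "single_ok N l1 r1 l2 r2 D a' b'"
    and po: "pair_ok D a b a' b'" using I ab ab' unfolding Inv_def by auto
  have pa: "present N l1 r1 a" "present N l1 r1 a'" and pb: "present N l2 r2 b" "present N l2 r2 b'"
    using s s' unfolding single_ok_def by auto
  have L: "pos a \<le> D \<or> pos b \<le> D \<longrightarrow> pos a = pos b" and R: "N \<le> pos a + D \<or> N \<le> pos b + D \<longrightarrow> pos a = pos b"
    using s unfolding single_ok_def by blast+
  have al: "alive N a \<longleftrightarrow> alive N b"
  proof (cases "pos a = pos b")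
    case True
    thus ?thesis unfolding alive_def by simp
  next
    case False
    hence "\<not> (pos a \<le> D \<or> pos b \<le> D)" "\<not> (N \<le> pos a + D \<or> N \<le> pos b + D)" using L R by blast+
    thus ?thesis unfolding alive_def using D by linarith
  qed
  have ev: "even (pos a) \<longleftrightarrow> even (pos b)" using s unfolding single_ok_def by blast
  have eq: "a = a' \<longleftrightarrow> b = b'"
  proof
    assume h: "a = a'"
    hence "close D a a'" unfolding close_def by simp
    hence "cp b = cp b' \<and> pos a' + pos b = pos b' + pos a" using po unfolding pair_ok_def by blast
    hence "cp b = cp b'" "pos b = pos b'" using h by auto
    thus "b = b'" using elem_eq by blast
  next
    assume h: "b = b'"
    hence "close D b b'" unfolding close_def by simp
    hence "cp a = cp a' \<and> pos a' + pos b = pos b' + pos a" using po unfolding pair_ok_def by blast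
    hence "cp a = cp a'" "pos a = pos a'" using h by auto
    thus "a = a'" using elem_eq by blast
  qed
  have nb: "(cp a = cp a' \<and> (pos a' = Suc (pos a) \<or> pos a = Suc (pos a'))) \<longleftrightarrow>
      (cp b = cp b' \<and> (pos b' = Suc (pos b) \<or> pos b = Suc (pos b')))"
  proof
    assume h: "cp a = cp a' \<and> (pos a' = Suc (pos a) \<or> pos a = Suc (pos a'))"
    hence "close D a a'" using D unfolding close_def by auto
    hence "cp b = cp b' \<and> pos a' + pos b = pos b' + pos a" using po unfolding pair_ok_def by blast
    thus "cp b = cp b' \<and> (pos b' = Suc (pos b) \<or> pos b = Suc (pos b'))" using h by linarith
  next
    assume h: "cp b = cp b' \<and> (pos b' = Suc (pos b) \<or> pos b = Suc (pos b'))"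
    hence "close D b b'" using D unfolding close_def by auto
    hence "cp a = cp a' \<and> pos a' + pos b = pos b' + pos a" using po unfolding pair_ok_def by blast
    thus "cp a = cp a' \<and> (pos a' = Suc (pos a) \<or> pos a = Suc (pos a'))" using h by linarith
  qed
  have ed: "edge N l1 r1 a a' \<longleftrightarrow> edge N l2 r2 b b'"
    unfolding edge_def using al nb pa pb by blast
  have eq': "a' = a \<longleftrightarrow> b' = b" using eq by blast
  show ?thesis
  proof (intro conjI allI eq)
    fix i
    show "(a, a') \<in> inst k p q N l1 r1 i \<longleftrightarrow> (b, b') \<in> inst k p q N l2 r2 i"
      unfolding inst_mem using ed ev eq' pa pb by simp
  qed
qed

lemma bool_inj01: "l 0 \<noteq> l 1 \<Longrightarrow> l (cp x) = l (cp y) \<Longrightarrow> cp x = cp y"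
  using cp_cases[of x] cp_cases[of y] by auto

lemma bool_surj01: "l 0 \<noteq> l (1::nat) \<Longrightarrow> \<exists>c<2. l c = (X::bool)"
proof (cases "l 0 = X")
  case True thus ?thesis by (intro exI[of _ 0]) simp
next
  case False
  assume "l 0 \<noteq> l 1"
  hence "l 1 = X" using False by (smt (verit))
  thus ?thesis by (intro exI[of _ 1]) simp
qed

lemma cand_sep:
  fixes D j j' :: nat
  assumes "j < j'"
  shows "(2*D+2)*(j+1) + (2*D+2) \<le> (2*D+2)*(j'+1)"
proof -
  have "(2*D+2)*(j+2) \<le> (2*D+2)*(j'+1)" using assms by (intro mult_le_mono2) simp
  moreover have "(2*D+2)*(j+2) = (2*D+2)*(j+1) + (2*D+2)" by (simp add: algebra_simps)
  ultimately show ?thesis by simp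
qed

lemma forth_core:
  assumes inj: "l1 0 \<noteq> l1 1" "r1 0 \<noteq> r1 1" "l2 0 \<noteq> l2 1" "r2 0 \<noteq> r2 1"
    and I: "Inv N l1 r1 l2 r2 (2*D) S" and fin: "finite S" and D: "1 \<le> D"
    and NB: "(2*D+2)*(card S + 3) \<le> N"
    and pa: "present N l1 r1 a"
  shows "\<exists>b. present N l2 r2 b \<and> Inv N l1 r1 l2 r2 D (insert (a, b) S)"
proof -
  have ID: "Inv N l1 r1 l2 r2 D S" using inv_mono[OF I] by simp
  have "(2*D+2)*3 \<le> (2*D+2)*(card S + 3)" by (intro mult_le_mono2) simp
  hence N6: "6*D + 6 \<le> N" using NB by simp
  have SO: "single_ok N l1 r1 l2 r2 (2*D) a' b'" if "(a', b') \<in> S" for a' b'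
    using I that unfolding Inv_def by auto
  have PO: "pair_ok (2*D) a0 b0 a' b'" if "(a0, b0) \<in> S" "(a', b') \<in> S" for a0 b0 a' b'
    using I that unfolding Inv_def by auto
  have pa_pos: "pos a \<le> N" and pa0: "pos a = 0 \<Longrightarrow> l1 (cp a)" and paN: "pos a = N \<Longrightarrow> r1 (cp a)"
    using pa N6 unfolding present_def by auto
  show ?thesis
  proof (cases "\<exists>(a0, b0)\<in>S. close D a a0")
    case True
    then obtain a0 b0 where ab0: "(a0, b0) \<in> S" and cl: "close D a a0" by auto
    have so0: "single_ok N l1 r1 l2 r2 (2*D) a0 b0" using SO ab0 .
    have ev0: "even (pos a0) \<longleftrightarrow> even (pos b0)"
      and L0: "pos a0 \<le> 2*D \<or> pos b0 \<le> 2*D \<longrightarrow> pos a0 = pos b0 \<and> l1 (cp a0) = l2 (cp b0)"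
      and R0: "N \<le> pos a0 + 2*D \<or> N \<le> pos b0 + 2*D \<longrightarrow> pos a0 = pos b0 \<and> r1 (cp a0) = r2 (cp b0)"
      using so0 unfolding single_ok_def by blast+
    have c1: "cp a = cp a0" "pos a \<le> pos a0 + D" "pos a0 \<le> pos a + D" using cl unfolding close_def by auto
    define t where "t = pos b0 + pos a - pos a0"
    have KEY: "t + pos a0 = pos b0 + pos a"
    proof -
      have "pos a0 \<le> pos b0 + pos a"
      proof (cases "pos a0 \<le> 2*D \<or> pos b0 \<le> 2*D")
        case True thus ?thesis using L0 by auto
      next
        case False thus ?thesis using c1 by linarith
      qed
      thus ?thesis unfolding t_def by simp
    qed
    define b where "b = 2 * t + cp b0"
    have pb: "pos b = t" and cb: "cp b = cp b0" unfolding b_def using cp_lt[of b0] by auto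
    have La: "pos a \<le> D \<or> t \<le> D \<longrightarrow> t = pos a \<and> l1 (cp a) = l2 (cp b)"
    proof
      assume "pos a \<le> D \<or> t \<le> D"
      hence "pos a0 \<le> 2*D \<or> pos b0 \<le> 2*D" using KEY c1 by linarith
      hence "pos a0 = pos b0 \<and> l1 (cp a0) = l2 (cp b0)" using L0 by blast
      thus "t = pos a \<and> l1 (cp a) = l2 (cp b)" using KEY c1 cb by simp
    qed
    have Ra: "N \<le> pos a + D \<or> N \<le> t + D \<longrightarrow> t = pos a \<and> r1 (cp a) = r2 (cp b)"
    proof
      assume "N \<le> pos a + D \<or> N \<le> t + D"
      hence "N \<le> pos a0 + 2*D \<or> N \<le> pos b0 + 2*D" using KEY c1 by linarith
      hence "pos a0 = pos b0 \<and> r1 (cp a0) = r2 (cp b0)" using R0 by blast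
      thus "t = pos a \<and> r1 (cp a) = r2 (cp b)" using KEY c1 cb by simp
    qed
    have tN: "t \<le> N"
    proof (cases "N \<le> pos a0 + 2*D \<or> N \<le> pos b0 + 2*D")
      case True
      hence "pos a0 = pos b0" using R0 by blast
      thus ?thesis using KEY pa_pos by simp
    next
      case False thus ?thesis using KEY c1 by linarith
    qed
    have pb': "present N l2 r2 b"
    proof -
      consider "1 \<le> t \<and> t < N" | "t = 0" | "t = N" using tN by linarith
      thus ?thesis
      proof cases
        case 1 thus ?thesis unfolding present_def pb using tN by simp
      next
        case 2
        hence "t = pos a \<and> l1 (cp a) = l2 (cp b)" using La by simp
        hence "l2 (cp b)" using pa0 2 by simp
        thus ?thesis unfolding present_def pb using 2 by simp
      next
        case 3
        hence "t = pos a \<and> r1 (cp a) = r2 (cp b)" using Ra by simp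
        hence "r2 (cp b)" using paN 3 by simp
        thus ?thesis unfolding present_def pb using 3 by simp
      qed
    qed
    have par: "even (pos a) \<longleftrightarrow> even t" using KEY ev0 by presburger
    have sok: "single_ok N l1 r1 l2 r2 D a b"
      unfolding single_ok_def pb using pa pb' par La Ra by blast
    have pok: "\<forall>(a', b')\<in>S. pair_ok D a b a' b'"
    proof (intro ballI)
      fix u assume u: "u \<in> S"
      obtain a' b' where ue: "u = (a', b')" by force
      have P0: "pair_ok (2*D) a0 b0 a' b'" using PO ab0 u ue by simp
      have "pair_ok D a b a' b'" unfolding pair_ok_def
      proof
        assume h: "close D a a' \<or> close D b b'"
        have "close (2*D) a0 a' \<or> close (2*D) b0 b'"
        proof (cases "close D a a'")
          case True
          hence "close (2*D) a0 a'" using c1 unfolding close_def by linarith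
          thus ?thesis ..
        next
          case False
          hence "close D b b'" using h by blast
          hence "close (2*D) b0 b'" using c1 KEY pb cb unfolding close_def by linarith
          thus ?thesis ..
        qed
        hence "cp a0 = cp a' \<and> cp b0 = cp b' \<and> pos a' + pos b0 = pos b' + pos a0"
          using P0 unfolding pair_ok_def by blast
        thus "cp a = cp a' \<and> cp b = cp b' \<and> pos a' + pos b = pos b' + pos a"
          using c1 cb pb KEY by linarith
      qed
      thus "case u of (a', b') \<Rightarrow> pair_ok D a b a' b'" using ue by simp
    qed
    show ?thesis using inv_insertI[OF ID sok pok] pb' by blast
  next
    case False
    hence ncl: "\<And>a' b'. (a', b') \<in> S \<Longrightarrow> \<not> close D a a'" by blast
    show ?thesis
    proof (cases "pos a \<le> D")
      case True
      obtain c where c2: "c < 2" and lc: "l2 c = l1 (cp a)" using bool_surj01[OF inj(3)] by blast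
      define b where "b = 2 * pos a + c"
      have pb: "pos b = pos a" and cb: "cp b = c" unfolding b_def using c2 by auto
      have pb': "present N l2 r2 b"
      proof (cases "pos a = 0")
        case True thus ?thesis unfolding present_def pb cb using pa0 lc by simp
      next
        case False thus ?thesis unfolding present_def pb using True N6 by simp
      qed
      have sok: "single_ok N l1 r1 l2 r2 D a b"
        unfolding single_ok_def pb cb using pa pb' True N6 lc by simp
      have pok: "\<forall>(a', b')\<in>S. pair_ok D a b a' b'"
      proof (intro ballI)
        fix u assume u: "u \<in> S"
        obtain a' b' where ue: "u = (a', b')" by force
        have uS: "(a', b') \<in> S" using u ue by simp
        have "\<not> close D b b'"
        proof
          assume h: "close D b b'"
          hence "cp b' = c" "pos b' \<le> 2*D" using cb pb True unfolding close_def by auto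
          hence "pos a' = pos b' \<and> l1 (cp a') = l2 (cp b')" using SO[OF uS] unfolding single_ok_def by blast
          hence "pos a' = pos b'" "cp a' = cp a" using bool_inj01[OF inj(1)] lc \<open>cp b' = c\<close> by auto
          hence "close D a a'" using h pb unfolding close_def by auto
          thus False using ncl uS by blast
        qed
        thus "case u of (a', b') \<Rightarrow> pair_ok D a b a' b'" using ue ncl[OF uS] unfolding pair_ok_def by simp
      qed
      show ?thesis using inv_insertI[OF ID sok pok] pb' by blast
    next
      case notL: False
      show ?thesis
      proof (cases "N \<le> pos a + D")
        case True
        obtain c where c2: "c < 2" and rc: "r2 c = r1 (cp a)" using bool_surj01[OF inj(4)] by blast
        define b where "b = 2 * pos a + c"
        have pb: "pos b = pos a" and cb: "cp b = c" unfolding b_def using c2 by auto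
        have pb': "present N l2 r2 b"
        proof (cases "pos a = N")
          case True thus ?thesis unfolding present_def pb cb using paN rc by simp
        next
          case False thus ?thesis unfolding present_def pb using notL pa_pos D by simp
        qed
        have sok: "single_ok N l1 r1 l2 r2 D a b"
          unfolding single_ok_def pb cb using pa pb' True notL rc by simp
        have pok: "\<forall>(a', b')\<in>S. pair_ok D a b a' b'"
        proof (intro ballI)
          fix u assume u: "u \<in> S"
          obtain a' b' where ue: "u = (a', b')" by force
          have uS: "(a', b') \<in> S" using u ue by simp
          have "\<not> close D b b'"
          proof
            assume h: "close D b b'"
            hence "cp b' = c" "N \<le> pos b' + 2*D" using cb pb True unfolding close_def by auto
            hence "pos a' = pos b' \<and> r1 (cp a') = r2 (cp b')" using SO[OF uS] unfolding single_ok_def by blast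
            hence "pos a' = pos b'" "cp a' = cp a" using bool_inj01[OF inj(2)] rc \<open>cp b' = c\<close> by auto
            hence "close D a a'" using h pb unfolding close_def by auto
            thus False using ncl uS by blast
          qed
          thus "case u of (a', b') \<Rightarrow> pair_ok D a b a' b'" using ue ncl[OF uS] unfolding pair_ok_def by simp
        qed
        show ?thesis using inv_insertI[OF ID sok pok] pb' by blast
      next
        case notR: False
        define M where "M = card S"
        define cand where "cand j = (2*D+2)*(j+1) + pos a mod 2" for j
        have "\<exists>j\<le>M. \<forall>(a', b')\<in>S. \<not> close D (2 * cand j) b'"
        proof (rule ccontr)
          assume "\<not> (\<exists>j\<le>M. \<forall>(a', b')\<in>S. \<not> close D (2 * cand j) b')"
          hence ex: "\<forall>j\<le>M. \<exists>u\<in>S. close D (2 * cand j) (snd u)" by (auto simp: case_prod_beta)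
          define f where "f j = (SOME u. u \<in> S \<and> close D (2 * cand j) (snd u))" for j
          have fS: "f j \<in> S \<and> close D (2 * cand j) (snd (f j))" if "j \<le> M" for j
          proof -
            have "\<exists>u. u \<in> S \<and> close D (2 * cand j) (snd u)" using ex that by blast
            thus ?thesis unfolding f_def by (rule someI_ex)
          qed
          have pc: "pos (2 * cand j) = cand j" for j using pos_mk[of 0 "cand j"] by simp
          have sep: "\<not> (close D (2 * cand j) y \<and> close D (2 * cand j') y)" if "j < j'" for j j' y
          proof
            assume h: "close D (2 * cand j) y \<and> close D (2 * cand j') y"
            have "(2*D+2)*(j+1) + (2*D+2) \<le> (2*D+2)*(j'+1)" using cand_sep[OF that] .
            moreover have "pos y \<le> cand j + D" "cand j' \<le> pos y + D"
              using h pc[of j] pc[of j'] unfolding close_def by auto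
            ultimately show False unfolding cand_def by linarith
          qed
          have "inj_on f {..M}"
          proof (rule inj_onI)
            fix j j' assume j: "j \<in> {..M}" and j': "j' \<in> {..M}" and e: "f j = f j'"
            have jj: "j \<le> M" "j' \<le> M" using j j' by auto
            have h1: "close D (2 * cand j) (snd (f j))" using fS[OF jj(1)] by blast
            have h2: "close D (2 * cand j') (snd (f j))" using fS[OF jj(2)] e by simp
            show "j = j'"
            proof (rule ccontr)
              assume "j \<noteq> j'"
              hence "j < j' \<or> j' < j" by linarith
              thus False using sep h1 h2 by blast
            qed
          qed
          moreover have "f ` {..M} \<subseteq> S" using fS by auto
          ultimately have "card {..M} \<le> card S" using card_inj_on_le fin by blast
          thus False unfolding M_def by simp
        qed
        then obtain j where jM: "j \<le> M" and far: "\<forall>(a', b')\<in>S. \<not> close D (2 * cand j) b'" by blast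
        define b where "b = 2 * cand j + 0"
        have pb: "pos b = cand j" and cb: "cp b = 0" unfolding b_def using pos_mk[of 0 "cand j"] cp_mk[of 0 "cand j"] by auto
        have "(2*D+2)*(j+1) \<le> (2*D+2)*(M+1)" using jM by (intro mult_le_mono2) simp
        moreover have "(2*D+2)*(M+3) = (2*D+2)*(M+1) + (4*D+4)" by (simp add: algebra_simps)
        moreover have "2*D+2 \<le> (2*D+2)*(j+1)" by simp
        moreover have "pos a mod 2 \<le> 1" by simp
        ultimately have cb1: "D < cand j" and cb2: "cand j + D < N"
          using NB unfolding cand_def M_def by linarith+
        have ev: "even ((2*D+2)*(j+1))" by simp
        have par: "even (pos a) \<longleftrightarrow> even (pos b)"
        proof -
          obtain X where X: "X = (2*D+2)*(j+1)" "even X" using ev by blast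
          have "pos b = X + pos a mod 2" unfolding pb cand_def X(1) ..
          thus ?thesis using X(2) by presburger
        qed
        have pb': "present N l2 r2 b" unfolding present_def pb using cb1 cb2 D by simp
        have sok: "single_ok N l1 r1 l2 r2 D a b"
          unfolding single_ok_def pb using pa pb' par pb notL notR cb1 cb2 by simp
        have pok: "\<forall>(a', b')\<in>S. pair_ok D a b a' b'"
        proof (intro ballI)
          fix u assume u: "u \<in> S"
          obtain a' b' where ue: "u = (a', b')" by force
          have uS: "(a', b') \<in> S" using u ue by simp
          have "\<not> close D b b'" using far uS unfolding b_def by auto
          thus "case u of (a', b') \<Rightarrow> pair_ok D a b a' b'" using ue ncl[OF uS] unfolding pair_ok_def by simp
        qed
        show ?thesis using inv_insertI[OF ID sok pok] pb' by blast
      qed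
    qed
  qed
qed

lemma pos_plus2: "pos (e + 2) = Suc (pos e)" "cp (e + 2) = cp e"
  unfolding pos_def cp_def by auto

lemma pos_minus2: "1 \<le> pos e \<Longrightarrow> pos (e - 2) = pos e - 1 \<and> cp (e - 2) = cp e"
  unfolding pos_def cp_def by (auto simp: div_le_mono le_div_geq le_mod_geq)

lemma alive_present: "alive N e \<Longrightarrow> present N lE rE e"
  unfolding alive_def present_def by simp

lemma edge_in:
  assumes "edge N lE rE e e'" "p < k" "q < k" "p \<noteq> q"
  shows "(e, e') \<in> inst k p q N lE rE (if even (pos e) then p else q)"
  using assms unfolding inst_mem by auto

lemma present_bound: "present N lE rE e \<Longrightarrow> e \<le> 2 * N + 1"
  unfolding present_def pos_def by linarith

lemma adom_inst:
  assumes pk: "p < k" and qk: "q < k" and pq: "p \<noteq> q" and N3: "3 \<le> N"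
  shows "adom k (inst k p q N lE rE) = {e. present N lE rE e}"
proof
  show "adom k (inst k p q N lE rE) \<subseteq> {e. present N lE rE e}"
  proof
    fix e assume "e \<in> adom k (inst k p q N lE rE)"
    then obtain i e' where "i < k" and
      h: "(e, e') \<in> inst k p q N lE rE i \<or> (e', e) \<in> inst k p q N lE rE i"
      unfolding adom_def by force
    thus "e \<in> {e. present N lE rE e}"
      unfolding inst_mem edge_def using alive_present by (auto split: if_splits)
  qed
next
  show "{e. present N lE rE e} \<subseteq> adom k (inst k p q N lE rE)"
  proof
    fix e assume "e \<in> {e. present N lE rE e}"
    hence pe: "present N lE rE e" by simp
    let ?I = "inst k p q N lE rE"
    let ?j = "\<lambda>e. if even (pos e) then p else q"
    have jk: "?j e < k" for e using pk qk by simp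
    show "e \<in> adom k ?I"
    proof (cases "alive N e")
      case True
      show ?thesis
      proof (cases "Suc (pos e) < N")
        case True
        have "present N lE rE (e + 2)" unfolding present_def pos_plus2 using True by simp
        hence "edge N lE rE e (e + 2)" unfolding edge_def pos_plus2 using \<open>alive N e\<close> by simp
        hence "(e, e + 2) \<in> ?I (?j e)" using edge_in pk qk pq by blast
        thus ?thesis using adomI1 jk by blast
      next
        case False
        hence p1: "1 \<le> pos e - 1" "pos e - 1 < N" using True N3 unfolding alive_def by auto
        have pm: "pos (e - 2) = pos e - 1" "cp (e - 2) = cp e" using pos_minus2 True unfolding alive_def by auto
        have "present N lE rE (e - 2)" unfolding present_def pm using p1 by simp
        hence "edge N lE rE e (e - 2)" unfolding edge_def pm using True p1 by auto
        hence "(e, e - 2) \<in> ?I (?j e)" using edge_in pk qk pq by blast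
        thus ?thesis using adomI1 jk by blast
      qed
    next
      case False
      hence "pos e = 0 \<or> pos e = N" using pe unfolding present_def alive_def by auto
      thus ?thesis
      proof
        assume z: "pos e = 0"
        have "alive N (e + 2)" unfolding alive_def pos_plus2 using z N3 by simp
        hence "edge N lE rE (e + 2) e" unfolding edge_def pos_plus2 using pe z by simp
        hence "(e + 2, e) \<in> ?I (?j (e + 2))" using edge_in pk qk pq by blast
        thus ?thesis using adomI2 jk by blast
      next
        assume z: "pos e = N"
        have pm: "pos (e - 2) = pos e - 1" "cp (e - 2) = cp e" using pos_minus2 z N3 by auto
        have "alive N (e - 2)" unfolding alive_def pm using z N3 by simp
        hence "edge N lE rE (e - 2) e" unfolding edge_def pm using pe z N3 by simp
        hence "(e - 2, e) \<in> ?I (?j (e - 2))" using edge_in pk qk pq by blast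
        thus ?thesis using adomI2 jk by blast
      qed
    qed
  qed
qed

lemma legal_inst_inst:
  assumes pk: "p < k" and qk: "q < k" and pq: "p \<noteq> q" and ip: "incons p" and iq: "incons q"
  shows "legal_inst k incons (inst k p q N lE rE)"
  unfolding legal_inst_def
proof (intro conjI allI impI)
  fix i assume "i < k"
  have "inst k p q N lE rE i \<subseteq> {..2*N+1} \<times> {..2*N+1}"
  proof
    fix x assume x: "x \<in> inst k p q N lE rE i"
    obtain a b where xe: "x = (a, b)" by force
    have "(a, b) \<in> inst k p q N lE rE i" using x xe by simp
    hence "present N lE rE a \<and> present N lE rE b"
      using alive_present unfolding inst_mem edge_def by (auto split: if_splits)
    thus "x \<in> {..2*N+1} \<times> {..2*N+1}" using present_bound xe by auto
  qed
  thus "finite (inst k p q N lE rE i)" by (rule finite_subset) simp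
next
  fix i assume "k \<le> i"
  thus "inst k p q N lE rE i = {}" using pk qk unfolding inst_def by auto
next
  fix i assume "i < k" "\<not> incons i"
  hence "i \<noteq> p" "i \<noteq> q" using ip iq by auto
  thus "key_consistent (inst k p q N lE rE i)" unfolding key_consistent_def inst_mem by auto
qed

lemma cyc_mono:
  fixes f :: "nat \<Rightarrow> nat"
  assumes k: "0 < k" and m: "\<forall>i<k. f i \<le> f (Suc i mod k)" and i: "i < k" and j: "j < k"
  shows "f i \<le> f j"
proof -
  have up: "f 0 \<le> f j" if "j < k" for j
    using that
  proof (induction j)
    case 0 thus ?case by simp
  next
    case (Suc j)
    have jk: "j < k" using Suc.prems by simp
    have "f j \<le> f (Suc j mod k)" using m jk by blast
    moreover have "Suc j mod k = Suc j" using Suc.prems by simp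
    ultimately show ?case using Suc.IH jk by simp
  qed
  have down: "f (k - 1 - d) \<le> f (k - 1)" if "d < k" for d
    using that
  proof (induction d)
    case 0 thus ?case by simp
  next
    case (Suc d)
    have e: "Suc (k - 1 - Suc d) = k - 1 - d" using Suc.prems by simp
    have lk: "k - 1 - Suc d < k" using Suc.prems by simp
    have "f (k - 1 - Suc d) \<le> f (Suc (k - 1 - Suc d) mod k)" using m lk by blast
    also have "Suc (k - 1 - Suc d) mod k = k - 1 - d" using e Suc.prems by simp
    finally show ?case using Suc by simp
  qed
  have "k - 1 < k" using k by simp
  hence "f (k - 1) \<le> f (Suc (k - 1) mod k)" using m by blast
  moreover have "Suc (k - 1) mod k = 0" using k by simp
  ultimately have l0: "f (k - 1) \<le> f 0" by simp
  have "f i \<le> f (k - 1)" using down[of "k - 1 - i"] i by simp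
  thus ?thesis using l0 up[OF j] by simp
qed

lemma pos_SS: "pos (Suc (Suc e)) = Suc (pos e)" "cp (Suc (Suc e)) = cp e"
  using pos_plus2[of e] by simp_all

lemma alive_has_edge:
  assumes "alive N e" "3 \<le> N"
  shows "\<exists>e'. edge N lE rE e e'"
proof (cases "Suc (pos e) < N")
  case True
  have "present N lE rE (e + 2)" unfolding present_def pos_plus2 using True by simp
  hence "edge N lE rE e (e + 2)" unfolding edge_def pos_plus2 using assms by simp
  thus ?thesis by blast
next
  case False
  hence p1: "1 \<le> pos e - 1" "pos e - 1 < N" using assms unfolding alive_def by auto
  have pm: "pos (e - 2) = pos e - 1" "cp (e - 2) = cp e" using pos_minus2 assms unfolding alive_def by auto
  have "present N lE rE (e - 2)" unfolding present_def pm using p1 by simp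
  hence "edge N lE rE e (e - 2)" unfolding edge_def pm using assms p1 by auto
  thus ?thesis by blast
qed

lemma twocycle_cycle:
  assumes pq: "p < q" and qk: "q < k" and R: "repair k (inst k p q N lE rE) r"
    and ab: "(a, b) \<in> r p" and ba: "(b, a) \<in> r q"
    and pa: "present N lE rE a" and pb: "present N lE rE b"
  shows "cycle_query k r"
proof -
  define x where "x i = (if p < i \<and> i \<le> q then b else a)" for i
  have ri: "r i = inst k p q N lE rE i" if "i < k" "i \<noteq> p" "i \<noteq> q" for i
    using repair_cons[OF R that(1)] that unfolding key_consistent_def inst_mem by auto
  have "\<forall>i<k. (x i, x (Suc i mod k)) \<in> r i"
  proof (intro allI impI)
    fix i assume ik: "i < k"
    consider "i = p" | "i = q" | "i \<noteq> p" "i \<noteq> q" by blast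
    thus "(x i, x (Suc i mod k)) \<in> r i"
    proof cases
      case 1
      have "Suc p mod k = Suc p" using pq qk by simp
      thus ?thesis using 1 ab pq unfolding x_def by simp
    next
      case 2
      have "x (Suc q mod k) = a"
      proof (cases "Suc q < k")
        case True thus ?thesis unfolding x_def by simp
      next
        case False
        hence "Suc q = k" using qk by simp
        hence "Suc q mod k = 0" by simp
        thus ?thesis unfolding x_def by simp
      qed
      thus ?thesis using 2 ba pq unfolding x_def by simp
    next
      case 3
      have "x (Suc i mod k) = x i"
      proof (cases "Suc i < k")
        case True thus ?thesis using 3 unfolding x_def by auto
      next
        case False
        hence "Suc i = k" using ik by simp
        hence "Suc i mod k = 0" by simp
        thus ?thesis using 3 \<open>Suc i = k\<close> qk unfolding x_def by auto
      qed
      moreover have "present N lE rE (x i)" unfolding x_def using pa pb by simp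
      ultimately show ?thesis using ri[OF ik 3] 3 ik by (simp add: inst_mem)
    qed
  qed
  thus ?thesis unfolding cycle_query_def by blast
qed

lemma r_edge:
  assumes R: "repair k (inst k p q N lE rE) r" and ik: "i < k" and e: "(e, e') \<in> r i"
    and ipq: "i = p \<or> i = q"
  shows "edge N lE rE e e'"
proof -
  have "r i \<subseteq> inst k p q N lE rE i" using R ik unfolding repair_char sub_inst_def by blast
  hence "(e, e') \<in> inst k p q N lE rE i" using e by blast
  thus ?thesis using ipq unfolding inst_mem by (auto split: if_splits)
qed

lemma certain_A:
  assumes pq: "p < q" and qk: "q < k" and N3: "3 \<le> N"
  shows "certain k (inst k p q N (\<lambda>c. c = 1) (\<lambda>c. c = 1))"
  unfolding certain_def
proof (intro allI impI)
  fix r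
  let ?l = "\<lambda>c::nat. c = 1"
  let ?I = "inst k p q N ?l ?l"
  assume R: "repair k ?I r"
  have pk: "p < k" using pq qk by simp
  have fs: "fst ` ?I i \<subseteq> fst ` r i" if "i < k" for i
    using R that unfolding repair_char by blast
  define rel where "rel e = (if even (pos e) then p else q)" for e
  have relk: "rel e < k" "rel e = p \<or> rel e = q" for e unfolding rel_def using pk qk by auto
  have p2: "pos (2 * t) = t" "cp (2 * t) = 0" for t using pos_mk[of 0 t] cp_mk[of 0 t] by auto
  have p22: "pos (2 * t + 2) = Suc t" "cp (2 * t + 2) = 0" for t
    using pos_mk[of 0 t] cp_mk[of 0 t] pos_plus2[of "2*t"] by auto
  have np: "\<not> present N ?l ?l e'" if "cp e' = 0" "pos e' = 0 \<or> pos e' = N" for e'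
    using that N3 unfolding present_def by auto
  have ch: "\<exists>e'. (2 * t, e') \<in> r (rel (2 * t)) \<and> edge N ?l ?l (2 * t) e'" if t: "1 \<le> t" "t < N" for t
  proof -
    have al: "alive N (2 * t)" unfolding alive_def p2 using t by simp
    then obtain e'' where "edge N ?l ?l (2 * t) e''" using alive_has_edge N3 by blast
    hence "(2 * t, e'') \<in> ?I (rel (2 * t))" using edge_in pk qk pq unfolding rel_def by simp
    hence "2 * t \<in> fst ` r (rel (2 * t))" using fs[OF relk(1)] by force
    then obtain e' where e': "(2 * t, e') \<in> r (rel (2 * t))" by force
    thus ?thesis using r_edge[OF R relk(1) e' relk(2)] by blast
  qed
  define TC where "TC \<longleftrightarrow> (\<exists>a b. (a, b) \<in> r p \<and> (b, a) \<in> r q \<and> present N ?l ?l a \<and> present N ?l ?l b)"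
  have mkTC: "TC" if h1: "(2 * t, 2 * t + 2) \<in> r (rel (2 * t))" and h2: "(2 * t + 2, 2 * t) \<in> r (rel (2 * t + 2))" for t
  proof -
    have e1: "edge N ?l ?l (2 * t) (2 * t + 2)" using r_edge[OF R relk(1) h1 relk(2)] .
    have e2: "edge N ?l ?l (2 * t + 2) (2 * t)" using r_edge[OF R relk(1) h2 relk(2)] .
    have pr: "present N ?l ?l (2 * t)" "present N ?l ?l (2 * t + 2)"
      using e1 alive_present unfolding edge_def by auto
    show ?thesis
    proof (cases "even t")
      case True
      hence "rel (2 * t) = p" "rel (2 * t + 2) = q" unfolding rel_def p2 p22 using pq by auto
      thus ?thesis unfolding TC_def using h1 h2 pr by auto
    next
      case False
      hence "rel (2 * t) = q" "rel (2 * t + 2) = p" unfolding rel_def p2 p22 using pq by auto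
      thus ?thesis unfolding TC_def using h1 h2 pr by auto
    qed
  qed
  have claim: "1 \<le> t \<longrightarrow> t < N \<longrightarrow> TC \<or> (2 * t, 2 * t + 2) \<in> r (rel (2 * t))" for t
  proof (induction t)
    case 0 thus ?case by simp
  next
    case (Suc t)
    show ?case
    proof (intro impI)
      assume t: "1 \<le> Suc t" "Suc t < N"
      obtain e' where e1: "(2 * Suc t, e') \<in> r (rel (2 * Suc t))" and ed: "edge N ?l ?l (2 * Suc t) e'"
        using ch[OF t] by blast
      have ce: "cp e' = 0" and pe: "present N ?l ?l e'" and ps: "pos e' = Suc (Suc t) \<or> Suc t = Suc (pos e')"
        using ed p2[of "Suc t"] unfolding edge_def by auto
      show "TC \<or> (2 * Suc t, 2 * Suc t + 2) \<in> r (rel (2 * Suc t))"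
      proof (cases "pos e' = Suc (Suc t)")
        case True
        hence "e' = 2 * Suc t + 2" using ce p22[of "Suc t"] elem_eq by metis
        thus ?thesis using e1 by simp
      next
        case False
        hence pt: "pos e' = t" using ps by simp
        have "pos e' \<noteq> 0" using np[OF ce] pe by metis
        hence "t \<noteq> 0" using pt by simp
        hence DD: "TC \<or> (2 * t, 2 * t + 2) \<in> r (rel (2 * t))" using Suc.IH t by simp
        have "e' = 2 * t" using ce pt p2[of t] elem_eq by metis
        from DD show ?thesis
        proof
          assume "TC" thus ?thesis by simp
        next
          assume h1: "(2 * t, 2 * t + 2) \<in> r (rel (2 * t))"
          have ee: "2 * Suc t = 2 * t + 2" by simp
          have h2: "(2 * t + 2, 2 * t) \<in> r (rel (2 * t + 2))" using e1 \<open>e' = 2 * t\<close> unfolding ee by simp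
          show ?thesis using mkTC[OF h1 h2] by blast
        qed
      qed
    qed
  qed
  have "TC \<or> (2 * (N - 1), 2 * (N - 1) + 2) \<in> r (rel (2 * (N - 1)))" using claim[of "N - 1"] N3 by simp
  moreover have "(2 * (N - 1), 2 * (N - 1) + 2) \<notin> r (rel (2 * (N - 1)))"
  proof
    assume h: "(2 * (N - 1), 2 * (N - 1) + 2) \<in> r (rel (2 * (N - 1)))"
    have "edge N ?l ?l (2 * (N - 1)) (2 * (N - 1) + 2)" using r_edge[OF R relk(1) h relk(2)] .
    hence "present N ?l ?l (2 * (N - 1) + 2)" unfolding edge_def by simp
    moreover have "pos (2 * (N - 1) + 2) = N" using p22[of "N - 1"] N3 by simp
    ultimately show False using np p22[of "N - 1"] by metis
  qed
  ultimately have TC by blast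
  then obtain a b where "(a, b) \<in> r p" "(b, a) \<in> r q" "present N ?l ?l a" "present N ?l ?l b"
    unfolding TC_def by blast
  thus "cycle_query k r" using twocycle_cycle[OF pq qk R] by blast
qed

lemma not_certain_B:
  assumes pq: "p < q" and qk: "q < k" and N3: "3 \<le> N"
  shows "\<not> certain k (inst k p q N (\<lambda>c. c = 0) (\<lambda>c. c = 1))"
proof
  let ?l = "\<lambda>c::nat. c = 0"
  let ?rr = "\<lambda>c::nat. c = 1"
  let ?I = "inst k p q N ?l ?rr"
  assume C: "certain k ?I"
  have pk: "p < k" using pq qk by simp
  define ch where "ch e = (if cp e = 1 then e + 2 else e - 2)" for e
  define sc where "sc e = (if cp e = 1 then pos e else N - pos e)" for e
  have chp: "edge N ?l ?rr e (ch e) \<and> sc (ch e) = Suc (sc e)" if al: "alive N e" for e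
  proof (cases "cp e = 1")
    case True
    have "present N ?l ?rr (e + 2)" unfolding present_def pos_plus2 using al True unfolding alive_def by auto
    thus ?thesis unfolding edge_def ch_def sc_def pos_plus2 using True al by (simp add: pos_SS)
  next
    case False
    hence c0: "cp e = 0" using cp_cases by blast
    have pm: "pos (e - 2) = pos e - 1" "cp (e - 2) = cp e" using pos_minus2 al unfolding alive_def by auto
    have "present N ?l ?rr (e - 2)" unfolding present_def pm using al c0 unfolding alive_def by auto
    moreover have "Suc (pos (e - 2)) = pos e" using pm(1) al unfolding alive_def by simp
    moreover have "N - pos (e - 2) = Suc (N - pos e)" using pm(1) al unfolding alive_def by (simp add: Suc_diff_le)
    ultimately show ?thesis unfolding edge_def ch_def sc_def using False al pm c0 by auto
  qed
  define r where "r i = (if i = p \<or> i = q then {(e, e'). (e, e') \<in> ?I i \<and> e' = ch e} else ?I i)" for i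
  have R: "repair k ?I r" unfolding repair_char
  proof (intro conjI)
    show "sub_inst k r ?I" unfolding sub_inst_def
    proof (intro conjI allI impI)
      fix i assume "i < k" thus "r i \<subseteq> ?I i" unfolding r_def by auto
    next
      fix i assume "k \<le> i" thus "r i = {}" using pk qk unfolding r_def inst_def by auto
    qed
    show "consistent_inst k r" unfolding consistent_inst_def key_consistent_def r_def
      by (auto simp: inst_mem)
    show "\<forall>i<k. fst ` ?I i \<subseteq> fst ` r i"
    proof (intro allI impI subsetI)
      fix i e assume ik: "i < k" and "e \<in> fst ` ?I i"
      then obtain e'' where ee: "(e, e'') \<in> ?I i" by force
      show "e \<in> fst ` r i"
      proof (cases "i = p \<or> i = q")
        case True
        hence "edge N ?l ?rr e e''" and par: "(i = p \<longrightarrow> even (pos e)) \<and> (i = q \<longrightarrow> odd (pos e))"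
          using ee pq unfolding inst_mem by (auto split: if_splits)
        hence "alive N e" unfolding edge_def by simp
        hence "edge N ?l ?rr e (ch e)" using chp by blast
        hence "(e, ch e) \<in> ?I i" using True par pq unfolding inst_mem by auto
        hence "(e, ch e) \<in> r i" unfolding r_def using True by simp
        thus ?thesis by force
      next
        case False
        thus ?thesis using ee unfolding r_def by force
      qed
    qed
  qed
  hence "cycle_query k r" using C unfolding certain_def by blast
  then obtain x where x: "\<forall>i<k. (x i, x (Suc i mod k)) \<in> r i" unfolding cycle_query_def by blast
  have step: "sc (x i) \<le> sc (x (Suc i mod k)) \<and> (i = p \<longrightarrow> sc (x i) < sc (x (Suc i mod k)))"
    if ik: "i < k" for i
  proof (cases "i = p \<or> i = q")
    case True
    have xi: "(x i, x (Suc i mod k)) \<in> r i" using x ik by blast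
    have "r i = {(e, e'). (e, e') \<in> ?I i \<and> e' = ch e}" using True unfolding r_def by presburger
    hence h: "(x i, x (Suc i mod k)) \<in> ?I i" "x (Suc i mod k) = ch (x i)" using xi by auto
    hence "edge N ?l ?rr (x i) (x (Suc i mod k))" using True pq unfolding inst_mem by (auto split: if_splits)
    hence "alive N (x i)" unfolding edge_def by simp
    hence "sc (ch (x i)) = Suc (sc (x i))" using chp by blast
    hence "sc (x i) < sc (x (Suc i mod k))" using h(2) by simp
    thus ?thesis by (meson less_imp_le)
  next
    case False
    have xi: "(x i, x (Suc i mod k)) \<in> r i" using x ik by blast
    have "r i = ?I i" using False unfolding r_def by presburger
    hence "x (Suc i mod k) = x i" using xi False ik by (simp add: inst_mem)
    thus ?thesis using False by simp
  qed
  have k0: "0 < k" using qk by simp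
  have "\<forall>i<k. (sc \<circ> x) i \<le> (sc \<circ> x) (Suc i mod k)" using step by simp
  moreover have "Suc p mod k < k" using k0 by simp
  ultimately have "(sc \<circ> x) (Suc p mod k) \<le> (sc \<circ> x) p" using cyc_mono[OF k0] pk by blast
  moreover have "sc (x p) < sc (x (Suc p mod k))" using step[OF pk] by simp
  ultimately show False by simp
qed

lemma not_expr:
  assumes k2: "2 \<le> k" and pq: "p < q" and qk: "q < k" and ip: "incons p" and iq: "incons q"
  shows "\<not> certainty_fo_expressible k incons"
proof
  assume "certainty_fo_expressible k incons"
  then obtain \<phi> where fs: "fo_sentence k \<phi>"
    and eqv: "\<forall>I. legal_inst k incons I \<longrightarrow> (certain k I \<longleftrightarrow> models k I \<phi>)"
    unfolding certainty_fo_expressible_def by blast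
  define n where "n = qd \<phi>"
  define N where "N = (2 * 2^n + 2) * (n + 3)"
  have "(2::nat) * 3 \<le> (2 * 2^n + 2) * (n + 3)" by (intro mult_le_mono) auto
  hence N3: "3 \<le> N" unfolding N_def by simp
  define lA where "lA = (\<lambda>c::nat. c = 1)"
  define lB where "lB = (\<lambda>c::nat. c = 0)"
  have pk: "p < k" and pq': "p \<noteq> q" using pq qk by auto
  have adA: "adom k (inst k p q N lA lA) = {e. present N lA lA e}" using adom_inst[OF pk qk pq' N3] .
  have adB: "adom k (inst k p q N lB lA) = {e. present N lB lA e}" using adom_inst[OF pk qk pq' N3] .
  have iA: "lA 0 \<noteq> lA 1" and iB: "lB 0 \<noteq> lB 1" unfolding lA_def lB_def by auto
  define P where "P m v w X \<longleftrightarrow> finite X \<and> card X + m \<le> n \<and>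
      Inv N lA lA lB lA (2^m) ((\<lambda>y. (v y, w y)) ` X)" for m and v w :: "nat \<Rightarrow> nat" and X :: "nat set"
  have NB: "(2 * 2^m + 2) * (card S + 3) \<le> N" if "card S \<le> card X" "card X + Suc m \<le> n"
    for m and S :: "(nat \<times> nat) set" and X :: "nat set"
  proof -
    have "2^m \<le> (2::nat)^n" using that(2) by (intro power_increasing) auto
    hence "2 * 2^m + 2 \<le> 2 * 2^n + (2::nat)" by simp
    moreover have "card S + 3 \<le> n + 3" using that by simp
    ultimately show ?thesis unfolding N_def by (intro mult_le_mono)
  qed
  have sub: "(\<lambda>y. ((v(x := a)) y, (w(x := b)) y)) ` insert x X \<subseteq> insert (a, b) ((\<lambda>y. (v y, w y)) ` X)"
    for v w :: "nat \<Rightarrow> nat" and x a b X by auto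
  have cins: "card (insert x X) + m \<le> n" if "finite X" "card X + Suc m \<le> n" for x :: nat and X m
    using that by (simp add: card_insert_if)
  have key: "sat k (inst k p q N lA lA) v \<phi> \<longleftrightarrow> sat k (inst k p q N lB lA) w \<phi>"
    if "P m v w X" "qd \<phi> \<le> m" "fv \<phi> \<subseteq> X" for m and v w :: "nat \<Rightarrow> nat" and X :: "nat set"
  proof (rule ef_lemma[where P = P, OF _ _ _ that])
    fix m v w X x y assume h: "P m v w X" "x \<in> X" "y \<in> X"
    have I: "Inv N lA lA lB lA (2^m) ((\<lambda>y. (v y, w y)) ` X)" using h(1) unfolding P_def by blast
    show "(v x = v y \<longleftrightarrow> w x = w y) \<and> (\<forall>i. (v x, v y) \<in> inst k p q N lA lA i \<longleftrightarrow> (w x, w y) \<in> inst k p q N lB lA i)"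
    proof -
      have m1: "1 \<le> (2::nat)^m" by simp
      have xs: "(v x, w x) \<in> (\<lambda>y. (v y, w y)) ` X" "(v y, w y) \<in> (\<lambda>y. (v y, w y)) ` X"
        using h(2,3) by auto
      show ?thesis using inv_atom[OF I m1 xs(1) xs(2)] .
    qed
  next
    fix m v w X x a assume h: "P (Suc m) v w X" "a \<in> adom k (inst k p q N lA lA)"
    let ?S = "(\<lambda>y. (v y, w y)) ` X"
    have fX: "finite X" and cX: "card X + Suc m \<le> n" and I: "Inv N lA lA lB lA (2 * 2^m) ?S"
      using h(1) unfolding P_def by auto
    have fS: "finite ?S" using fX by simp
    have cS: "card ?S \<le> card X" using card_image_le[OF fX] .
    have pa: "present N lA lA a" using h(2) adA by simp
    obtain b where pb: "present N lB lA b" and I': "Inv N lA lA lB lA (2^m) (insert (a, b) ?S)"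
      using forth_core[OF iA iA iB iA I fS _ NB[OF cS cX] pa] by auto
    have "P m (v(x := a)) (w(x := b)) (insert x X)"
      unfolding P_def using fX cins[OF fX cX] inv_mono[OF I' order_refl sub] by simp
    thus "\<exists>b\<in>adom k (inst k p q N lB lA). P m (v(x := a)) (w(x := b)) (insert x X)"
      using pb adB by auto
  next
    fix m v w X x b assume h: "P (Suc m) v w X" "b \<in> adom k (inst k p q N lB lA)"
    let ?S = "(\<lambda>y. (v y, w y)) ` X"
    have fX: "finite X" and cX: "card X + Suc m \<le> n" and I: "Inv N lA lA lB lA (2 * 2^m) ?S"
      using h(1) unfolding P_def by auto
    have fS: "finite (prod.swap ` ?S)" using fX by simp
    have cS: "card (prod.swap ` ?S) \<le> card X"
      using card_image_le[OF fX, of "\<lambda>y. (v y, w y)"] card_image_le[of ?S prod.swap] fX by simp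
    have I2: "Inv N lB lA lA lA (2 * 2^m) (prod.swap ` ?S)" using inv_swap[OF I] .
    have pb: "present N lB lA b" using h(2) adB by simp
    obtain a where pa: "present N lA lA a" and I': "Inv N lB lA lA lA (2^m) (insert (b, a) (prod.swap ` ?S))"
      using forth_core[OF iB iA iA iA I2 fS _ NB[OF cS cX] pb] by auto
    have e: "prod.swap ` insert (b, a) (prod.swap ` ?S) = insert (a, b) ?S" by force
    have I'': "Inv N lA lA lB lA (2^m) (insert (a, b) ?S)" using inv_swap[OF I'] unfolding e .
    have "P m (v(x := a)) (w(x := b)) (insert x X)"
      unfolding P_def using fX cins[OF fX cX] inv_mono[OF I'' order_refl sub] by simp
    thus "\<exists>a\<in>adom k (inst k p q N lA lA). P m (v(x := a)) (w(x := b)) (insert x X)"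
      using pa adA by auto
  qed
  have P0: "P n (\<lambda>_. 0) (\<lambda>_. 0) {}" unfolding P_def Inv_def by simp
  have fv0: "fv \<phi> \<subseteq> {}" using fs unfolding fo_sentence_def by simp
  have "models k (inst k p q N lA lA) \<phi> \<longleftrightarrow> models k (inst k p q N lB lA) \<phi>"
    unfolding models_def using key[OF P0 _ fv0] n_def by simp
  moreover have "certain k (inst k p q N lA lA)" using certain_A[OF pq qk N3] unfolding lA_def .
  moreover have "\<not> certain k (inst k p q N lB lA)" using not_certain_B[OF pq qk N3] unfolding lA_def lB_def .
  moreover have "legal_inst k incons (inst k p q N lA lA)" "legal_inst k incons (inst k p q N lB lA)"
    using legal_inst_inst[OF pk qk pq' ip iq] by auto
  ultimately show False using eqv by blast
qed

theorem proposition4p5: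
  fixes k :: nat and incons :: "nat \<Rightarrow> bool"
  assumes "k \<ge> 2"
  shows "certainty_fo_expressible k incons \<longleftrightarrow> card {i. i < k \<and> incons i} \<le> 1"
proof
  have fin: "finite {i. i < k \<and> incons i}" by simp
  assume E: "certainty_fo_expressible k incons"
  show "card {i. i < k \<and> incons i} \<le> 1"
  proof (rule ccontr)
    assume "\<not> card {i. i < k \<and> incons i} \<le> 1"
    hence "\<not> card {i. i < k \<and> incons i} \<le> Suc 0" by simp
    then obtain a b where a: "a < k" "incons a" and b: "b < k" "incons b" and ab: "a \<noteq> b"
      using card_le_Suc0_iff_eq[OF fin] by blast
    show False
    proof (cases "a < b")
      case True thus False using not_expr[OF assms True b(1) a(2) b(2)] E by blast
    next
      case False
      hence "b < a" using ab by simp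
      thus False using not_expr[OF assms _ a(1) b(2) a(2)] E by blast
    qed
  qed
next
  have fin: "finite {i. i < k \<and> incons i}" by simp
  assume C: "card {i. i < k \<and> incons i} \<le> 1"
  hence uniq: "\<forall>a\<in>{i. i < k \<and> incons i}. \<forall>b\<in>{i. i < k \<and> incons i}. a = b"
    using card_le_Suc0_iff_eq[OF fin] by simp
  define j where "j = (if \<exists>i<k. incons i then (SOME i. i < k \<and> incons i) else 0)"
  have jk: "j < k"
  proof (cases "\<exists>i<k. incons i")
    case True
    hence "\<exists>i. i < k \<and> incons i" by blast
    hence "(SOME i. i < k \<and> incons i) < k" using someI_ex[of "\<lambda>i. i < k \<and> incons i"] by blast
    thus ?thesis unfolding j_def using True by simp
  next
    case False
    hence "j = 0" unfolding j_def by auto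
    thus ?thesis using assms by simp
  qed
  have others_cons: "\<not> incons i" if "i < k" "i \<noteq> j" for i
  proof
    assume ii: "incons i"
    hence ex: "\<exists>i<k. incons i" using that by blast
    hence "j < k \<and> incons j" unfolding j_def using someI_ex[of "\<lambda>i. i < k \<and> incons i"] by auto
    thus False using uniq ii that by blast
  qed
  show "certainty_fo_expressible k incons" unfolding certainty_fo_expressible_def
  proof (intro exI conjI allI impI)
    show "fo_sentence k (Phi k j)" using Phi_sentence[OF jk assms] .
    fix I assume L: "legal_inst k incons I"
    have cons: "\<forall>i<k. i \<noteq> j \<longrightarrow> key_consistent (I i)" using L others_cons unfolding legal_inst_def by blast
    have emp: "\<forall>i. k \<le> i \<longrightarrow> I i = {}" using L unfolding legal_inst_def by blast
    show "certain k I \<longleftrightarrow> models k I (Phi k j)"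
      using cert_char[OF jk assms cons emp] models_Phi[OF jk assms] by simp
  qed
qed

end
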